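(* Let $(\mathcal{C},\Sigma)$ be an $n$-angulated category, $(\mathcal{A},\Sigma)$ a complete $n$-angulated subcategory, and $C$ an object of $\mathcal{C}$. If there exists an object $A$ of $\mathcal{A}$ such that $C\oplus A$ lies in $\mathcal{A}$, then $C$ lies in $\mathcal{A}$.
   Context: All categories are small. Fix an integer $n\ge 3$. Let $\mathcal{C}$ be an additive category with an automorphism $\Sigma$. An $n$-$\Sigma$-sequence in $\mathcal{C}$ is a diagram $A_1\xrightarrow{\alpha_1}A_2\xrightarrow{\alpha_2}\cdots\xrightarrow{\alpha_{n-1}}A_n\xrightarrow{\alpha_n}\Sigma A_1$. Its left rotation is $A_2\xrightarrow{\alpha_2}\cdots\xrightarrow{\alpha_n}\Sigma A_1\xrightarrow{(-1)^n\Sigma\alpha_1}\Sigma A_2$. A morphism from $(A_\bullet,\alpha)$ to $(B_\bullet,\beta)$ is a tuple $(\varphi_1,\dots,\varphi_n)$, $\varphi_i:A_i\to B_i$, with $\beta_i\varphi_i=\varphi_{i+1}\alpha_i$ for $1\le i\le n-1$ and $\beta_n\varphi_n=(\Sigma\varphi_1)\alpha_n$; it is an isomorphism if all $\varphi_i$ are isomorphisms. Direct sums of sequences are taken termwise. $(\mathcal{C},\Sigma)$ is $n$-angulated if it is equipped with a collection $\mathscr N$ of $n$-$\Sigma$-sequences, called $n$-angles, such that: (N1)(a) $\mathscr N$ is closed under direct sums, direct summands and isomorphisms of $n$-$\Sigma$-sequences; (b) for every object $A$, the trivial sequence $A\xrightarrow{1}A\to0\to\cdots\to0\to\Sigma A$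 is in $\mathscr N$; (c) every morphism $A_1\to A_2$ is the first morphism of some $n$-angle; (N2) an $n$-$\Sigma$-sequence is in $\mathscr N$ iff its left rotation is; (N3) given $n$-angles $(A_\bullet,\alpha),(B_\bullet,\beta)$ and $\varphi_1:A_1\to B_1$, $\varphi_2:A_2\to B_2$ with $\beta_1\varphi_1=\varphi_2\alpha_1$, there exist $\varphi_3,\dots,\varphi_n$ making $(\varphi_1,\dots,\varphi_n)$ a morphism; (N4) in (N3) the $\varphi_i$ can be chosen so that the mapping cone $A_2\oplus B_1\to A_3\oplus B_2\to\cdots\to\Sigma A_1\oplus B_n\to\Sigma A_2\oplus\Sigma B_1$, with maps $\left[\begin{smallmatrix}-\alpha_{i+1}&0\\ \varphi_{i+1}&\beta_i\end{smallmatrix}\right]$ ($1\le i\le n-1$) and last map $\left[\begin{smallmatrix}-\Sigma\alpha_1&0\\ \Sigma\varphi_1&\beta_n\end{smallmatrix}\right]$, is an $n$-angle. An additive functor $L:\mathcal{C}\to\mathcal{C}'$ between $n$-angulated categories $(\mathcal{C},\Sigma)$, $(\mathcal{C}',\Sigma')$ is $n$-angulated if there is a natural isomorphism $\eta:L\circ\Sigma\to\Sigma'\circ L$ such that for every $n$-angle $(A_\bullet,\alpha)$ in $\mathcal{C}$, $L A_1\xrightarrow{L\alpha_1}\cdots\xrightarrow{L\alpha_{n-1}}LA_n\xrightarrow{\eta\circ L\alpha_n}\Sigma'LA_1$ is an $n$-angle in $\mathcal{C}'$. An $n$-angulated subcategory of $(\mathcal{C},\Sigma)$ is a full subcategory $\mathcal{A}$,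 closed under isomorphisms, on which $\Sigma$ restricts to an automorphism, equipped with $n$-angles making $(\mathcal{A},\Sigma)$ an $n$-angulated category, such that the inclusion $\mathcal{A}\to\mathcal{C}$ is an $n$-angulated functor. A subcategory $\mathcal{A}$ is complete if whenever $A_1\to A_2\to\cdots\to A_n\to\Sigma A_1$ is an $n$-angle in $\mathcal{C}$ in which $n-1$ of the objects $A_1,\dots,A_n$ lie in $\mathcal{A}$, the remaining one also lies in $\mathcal{A}$. *)

theory Defs
  imports Main
begin

record ('o,'m) addcat =
  Ob  :: "'o set"
  Ar  :: "'m set"
  dom :: "'m \<Rightarrow> 'o"
  cod :: "'m \<Rightarrow> 'o"
  cmp :: "'m \<Rightarrow> 'm \<Rightarrow> 'm"   (* cmp C g f = g o f *)
  idt :: "'o \<Rightarrow> 'm"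
  pls :: "'m \<Rightarrow> 'm \<Rightarrow> 'm"
  zro :: "'o \<Rightarrow> 'o \<Rightarrow> 'm"
  ngt :: "'m \<Rightarrow> 'm"

definition hom :: "('o,'m,'x) addcat_scheme \<Rightarrow> 'o \<Rightarrow> 'o \<Rightarrow> 'm set" where
  "hom C a b = {f \<in> Ar C. dom C f = a \<and> cod C f = b}"

definition category :: "('o,'m,'x) addcat_scheme \<Rightarrow> bool" where
  "category C \<longleftrightarrow>
     (\<forall>f\<in>Ar C. dom C f \<in> Ob C \<and> cod C f \<in> Ob C) \<and>
     (\<forall>a\<in>Ob C. idt C a \<in> hom C a a) \<and>
     (\<forall>f\<in>Ar C. \<forall>g\<in>Ar C. cod C f = dom C g \<longrightarrow> cmp C g f \<in> hom C (dom C f) (cod C g)) \<and>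
     (\<forall>f\<in>Ar C. cmp C f (idt C (dom C f)) = f \<and> cmp C (idt C (cod C f)) f = f) \<and>
     (\<forall>f\<in>Ar C. \<forall>g\<in>Ar C. \<forall>h\<in>Ar C. cod C f = dom C g \<and> cod C g = dom C h \<longrightarrow>
         cmp C h (cmp C g f) = cmp C (cmp C h g) f)"

definition preadditive :: "('o,'m,'x) addcat_scheme \<Rightarrow> bool" where
  "preadditive C \<longleftrightarrow> category C \<and>
     (\<forall>a\<in>Ob C. \<forall>b\<in>Ob C.
        zro C a b \<in> hom C a b \<and>
        (\<forall>f\<in>hom C a b. \<forall>g\<in>hom C a b. pls C f g \<in> hom C a b \<and> pls C f g = pls C g f) \<and>
        (\<forall>f\<in>hom C a b. \<forall>g\<in>hom C a b. \<forall>h\<in>hom C a b. pls C (pls C f g) h = pls C f (pls C g h)) \<and>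
        (\<forall>f\<in>hom C a b. pls C f (zro C a b) = f \<and> ngt C f \<in> hom C a b \<and> pls C f (ngt C f) = zro C a b)) \<and>
     (\<forall>a\<in>Ob C. \<forall>b\<in>Ob C. \<forall>c\<in>Ob C.
        (\<forall>f\<in>hom C a b. \<forall>g\<in>hom C b c. \<forall>g'\<in>hom C b c.
            cmp C (pls C g g') f = pls C (cmp C g f) (cmp C g' f)) \<and>
        (\<forall>f\<in>hom C a b. \<forall>f'\<in>hom C a b. \<forall>g\<in>hom C b c.
            cmp C g (pls C f f') = pls C (cmp C g f) (cmp C g f')))"

definition is_zero_obj :: "('o,'m,'x) addcat_scheme \<Rightarrow> 'o \<Rightarrow> bool" where
  "is_zero_obj C z \<longleftrightarrow> z \<in> Ob C \<and>
     (\<forall>b\<in>Ob C. (\<exists>!f. f \<in> hom C z b) \<and> (\<exists>!f. f \<in> hom C b z))"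

definition biprod :: "('o,'m,'x) addcat_scheme \<Rightarrow> 'o \<Rightarrow> 'o \<Rightarrow> 'o \<Rightarrow> 'm \<Rightarrow> 'm \<Rightarrow> 'm \<Rightarrow> 'm \<Rightarrow> bool" where
  "biprod C a b s i1 i2 p1 p2 \<longleftrightarrow>
     a \<in> Ob C \<and> b \<in> Ob C \<and> s \<in> Ob C \<and>
     i1 \<in> hom C a s \<and> i2 \<in> hom C b s \<and> p1 \<in> hom C s a \<and> p2 \<in> hom C s b \<and>
     cmp C p1 i1 = idt C a \<and> cmp C p2 i2 = idt C b \<and>
     cmp C p1 i2 = zro C b a \<and> cmp C p2 i1 = zro C a b \<and>
     pls C (cmp C i1 p1) (cmp C i2 p2) = idt C s"

definition additive :: "('o,'m,'x) addcat_scheme \<Rightarrow> bool" where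
  "additive C \<longleftrightarrow> preadditive C \<and> (\<exists>z. is_zero_obj C z) \<and>
     (\<forall>a\<in>Ob C. \<forall>b\<in>Ob C. \<exists>s i1 i2 p1 p2. biprod C a b s i1 i2 p1 p2)"

definition iso :: "('o,'m,'x) addcat_scheme \<Rightarrow> 'm \<Rightarrow> bool" where
  "iso C h \<longleftrightarrow> h \<in> Ar C \<and>
     (\<exists>h'\<in>hom C (cod C h) (dom C h). cmp C h' h = idt C (dom C h) \<and> cmp C h h' = idt C (cod C h))"

definition "functor" :: "('o,'m,'x) addcat_scheme \<Rightarrow> ('p,'n,'y) addcat_scheme \<Rightarrow>
     ('o \<Rightarrow> 'p) \<Rightarrow> ('m \<Rightarrow> 'n) \<Rightarrow> bool" where
  "functor C D Fo Fm \<longleftrightarrow>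
     (\<forall>a\<in>Ob C. Fo a \<in> Ob D \<and> Fm (idt C a) = idt D (Fo a)) \<and>
     (\<forall>f\<in>Ar C. Fm f \<in> hom D (Fo (dom C f)) (Fo (cod C f))) \<and>
     (\<forall>f\<in>Ar C. \<forall>g\<in>Ar C. cod C f = dom C g \<longrightarrow> Fm (cmp C g f) = cmp D (Fm g) (Fm f))"

definition additive_functor :: "('o,'m,'x) addcat_scheme \<Rightarrow> ('p,'n,'y) addcat_scheme \<Rightarrow>
     ('o \<Rightarrow> 'p) \<Rightarrow> ('m \<Rightarrow> 'n) \<Rightarrow> bool" where
  "additive_functor C D Fo Fm \<longleftrightarrow> functor C D Fo Fm \<and>
     (\<forall>a\<in>Ob C. \<forall>b\<in>Ob C. \<forall>f\<in>hom C a b. \<forall>g\<in>hom C a b. Fm (pls C f g) = pls D (Fm f) (Fm g))"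

definition automorphism :: "('o,'m,'x) addcat_scheme \<Rightarrow> ('o \<Rightarrow> 'o) \<Rightarrow> ('m \<Rightarrow> 'm) \<Rightarrow> bool" where
  "automorphism C So Sm \<longleftrightarrow> functor C C So Sm \<and>
     bij_betw So (Ob C) (Ob C) \<and> bij_betw Sm (Ar C) (Ar C)"

section \<open>n-Sigma-sequences, indexed by 1..n\<close>

type_synonym ('o,'m) nseq = "(nat \<Rightarrow> 'o) \<times> (nat \<Rightarrow> 'm)"

definition is_nseq :: "('o,'m,'x) addcat_scheme \<Rightarrow> nat \<Rightarrow> ('o \<Rightarrow> 'o) \<Rightarrow> ('o,'m) nseq \<Rightarrow> bool" where
  "is_nseq C n So x \<longleftrightarrow>
     (\<forall>i\<in>{1..n}. fst x i \<in> Ob C) \<and>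
     (\<forall>i\<in>{1..<n}. snd x i \<in> hom C (fst x i) (fst x (Suc i))) \<and>
     snd x n \<in> hom C (fst x n) (So (fst x 1))"

definition sgnpow :: "('o,'m,'x) addcat_scheme \<Rightarrow> nat \<Rightarrow> 'm \<Rightarrow> 'm" where
  "sgnpow C k g = (if even k then g else ngt C g)"

definition rotL :: "('o,'m,'x) addcat_scheme \<Rightarrow> nat \<Rightarrow> ('o \<Rightarrow> 'o) \<Rightarrow> ('m \<Rightarrow> 'm) \<Rightarrow>
     ('o,'m) nseq \<Rightarrow> ('o,'m) nseq" where
  "rotL C n So Sm x =
     ((\<lambda>i. if i < n then fst x (Suc i) else So (fst x 1)),
      (\<lambda>i. if i < n then snd x (Suc i) else sgnpow C n (Sm (snd x 1))))"

definition seqmor :: "('o,'m,'x) addcat_scheme \<Rightarrow> nat \<Rightarrow> ('m \<Rightarrow> 'm) \<Rightarrow>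
     ('o,'m) nseq \<Rightarrow> ('o,'m) nseq \<Rightarrow> (nat \<Rightarrow> 'm) \<Rightarrow> bool" where
  "seqmor C n Sm x y \<phi> \<longleftrightarrow>
     (\<forall>i\<in>{1..n}. \<phi> i \<in> hom C (fst x i) (fst y i)) \<and>
     (\<forall>i\<in>{1..<n}. cmp C (snd y i) (\<phi> i) = cmp C (\<phi> (Suc i)) (snd x i)) \<and>
     cmp C (snd y n) (\<phi> n) = cmp C (Sm (\<phi> 1)) (snd x n)"

definition seqiso :: "('o,'m,'x) addcat_scheme \<Rightarrow> nat \<Rightarrow> ('m \<Rightarrow> 'm) \<Rightarrow>
     ('o,'m) nseq \<Rightarrow> ('o,'m) nseq \<Rightarrow> (nat \<Rightarrow> 'm) \<Rightarrow> bool" where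
  "seqiso C n Sm x y \<phi> \<longleftrightarrow> seqmor C n Sm x y \<phi> \<and> (\<forall>i\<in>{1..n}. iso C (\<phi> i))"

definition is_dsum :: "('o,'m,'x) addcat_scheme \<Rightarrow> nat \<Rightarrow> ('m \<Rightarrow> 'm) \<Rightarrow>
     ('o,'m) nseq \<Rightarrow> ('o,'m) nseq \<Rightarrow> ('o,'m) nseq \<Rightarrow> bool" where
  "is_dsum C n Sm x y s \<longleftrightarrow>
     (\<exists>i1 i2 p1 p2.
        (\<forall>k\<in>{1..n}. biprod C (fst x k) (fst y k) (fst s k) (i1 k) (i2 k) (p1 k) (p2 k)) \<and>
        (\<forall>k\<in>{1..<n}. snd s k =
            pls C (cmp C (i1 (Suc k)) (cmp C (snd x k) (p1 k)))
                  (cmp C (i2 (Suc k)) (cmp C (snd y k) (p2 k)))) \<and>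
        snd s n =
            pls C (cmp C (Sm (i1 1)) (cmp C (snd x n) (p1 n)))
                  (cmp C (Sm (i2 1)) (cmp C (snd y n) (p2 n))))"

text \<open>Trivial sequence A -1-> A -> 0 -> ... -> 0 -> Sigma A, for a zero object z.\<close>
definition trivseq :: "('o,'m,'x) addcat_scheme \<Rightarrow> nat \<Rightarrow> ('o \<Rightarrow> 'o) \<Rightarrow> 'o \<Rightarrow> 'o \<Rightarrow> ('o,'m) nseq" where
  "trivseq C n So z a =
     ((\<lambda>i. if i \<le> 2 then a else z),
      (\<lambda>i. if i = 1 then idt C a
           else if i < n then zro C (if i \<le> 2 then a else z) z
           else zro C z (So a)))"

text \<open>Mapping cone of (phi_1..phi_n): x -> y, with objects A_(i+1) (+) B_i.\<close>
definition is_cone :: "('o,'m,'x) addcat_scheme \<Rightarrow> nat \<Rightarrow> ('o \<Rightarrow> 'o) \<Rightarrow> ('m \<Rightarrow> 'm) \<Rightarrow>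
     ('o,'m) nseq \<Rightarrow> ('o,'m) nseq \<Rightarrow> (nat \<Rightarrow> 'm) \<Rightarrow> ('o,'m) nseq \<Rightarrow> bool" where
  "is_cone C n So Sm x y \<phi> c \<longleftrightarrow>
     (\<exists>i1 i2 p1 p2.
        (\<forall>k\<in>{1..n}. biprod C (if k < n then fst x (Suc k) else So (fst x 1)) (fst y k)
                        (fst c k) (i1 k) (i2 k) (p1 k) (p2 k)) \<and>
        (\<forall>k\<in>{1..<n}. snd c k =
            pls C (cmp C (i1 (Suc k)) (cmp C (ngt C (snd x (Suc k))) (p1 k)))
             (pls C (cmp C (i2 (Suc k)) (cmp C (\<phi> (Suc k)) (p1 k)))
                    (cmp C (i2 (Suc k)) (cmp C (snd y k) (p2 k))))) \<and>
        snd c n =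
            pls C (cmp C (Sm (i1 1)) (cmp C (ngt C (Sm (snd x 1))) (p1 n)))
             (pls C (cmp C (Sm (i2 1)) (cmp C (Sm (\<phi> 1)) (p1 n)))
                    (cmp C (Sm (i2 1)) (cmp C (snd y n) (p2 n)))))"

definition n_angulated :: "('o,'m,'x) addcat_scheme \<Rightarrow> nat \<Rightarrow> ('o \<Rightarrow> 'o) \<Rightarrow> ('m \<Rightarrow> 'm) \<Rightarrow>
     ('o,'m) nseq set \<Rightarrow> bool" where
  "n_angulated C n So Sm N \<longleftrightarrow>
     additive C \<and> automorphism C So Sm \<and>
     (\<forall>x\<in>N. is_nseq C n So x) \<and>
     \<comment> \<open>(N1a) closed under direct sums, direct summands and isomorphisms\<close>
     (\<forall>x y s. is_nseq C n So x \<and> is_nseq C n So y \<and> is_nseq C n So s \<and> is_dsum C n Sm x y s \<longrightarrow>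
         (s \<in> N \<longleftrightarrow> x \<in> N \<and> y \<in> N)) \<and>
     (\<forall>x y \<phi>. x \<in> N \<and> is_nseq C n So y \<and> seqiso C n Sm x y \<phi> \<longrightarrow> y \<in> N) \<and>
     \<comment> \<open>(N1b) trivial n-angles\<close>
     (\<forall>a\<in>Ob C. \<forall>z. is_zero_obj C z \<longrightarrow> trivseq C n So z a \<in> N) \<and>
     \<comment> \<open>(N1c)\<close>
     (\<forall>f\<in>Ar C. \<exists>x\<in>N. snd x 1 = f) \<and>
     \<comment> \<open>(N2)\<close>
     (\<forall>x. is_nseq C n So x \<longrightarrow> (x \<in> N \<longleftrightarrow> rotL C n So Sm x \<in> N)) \<and>
     \<comment> \<open>(N3)\<close>
     (\<forall>x\<in>N. \<forall>y\<in>N. \<forall>\<phi>1 \<phi>2.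
         \<phi>1 \<in> hom C (fst x 1) (fst y 1) \<and> \<phi>2 \<in> hom C (fst x 2) (fst y 2) \<and>
         cmp C (snd y 1) \<phi>1 = cmp C \<phi>2 (snd x 1) \<longrightarrow>
         (\<exists>\<phi>. \<phi> 1 = \<phi>1 \<and> \<phi> 2 = \<phi>2 \<and> seqmor C n Sm x y \<phi>)) \<and>
     \<comment> \<open>(N4)\<close>
     (\<forall>x\<in>N. \<forall>y\<in>N. \<forall>\<phi>1 \<phi>2.
         \<phi>1 \<in> hom C (fst x 1) (fst y 1) \<and> \<phi>2 \<in> hom C (fst x 2) (fst y 2) \<and>
         cmp C (snd y 1) \<phi>1 = cmp C \<phi>2 (snd x 1) \<longrightarrow>
         (\<exists>\<phi>. \<phi> 1 = \<phi>1 \<and> \<phi> 2 = \<phi>2 \<and> seqmor C n Sm x y \<phi> \<and>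
              (\<exists>c. is_cone C n So Sm x y \<phi> c \<and> c \<in> N)))"

definition nang_functor :: "('o,'m,'x) addcat_scheme \<Rightarrow> ('p,'n,'y) addcat_scheme \<Rightarrow> nat \<Rightarrow>
     ('o \<Rightarrow> 'o) \<Rightarrow> ('m \<Rightarrow> 'm) \<Rightarrow> ('p \<Rightarrow> 'p) \<Rightarrow> ('n \<Rightarrow> 'n) \<Rightarrow>
     ('o,'m) nseq set \<Rightarrow> ('p,'n) nseq set \<Rightarrow> ('o \<Rightarrow> 'p) \<Rightarrow> ('m \<Rightarrow> 'n) \<Rightarrow> bool" where
  "nang_functor C D n So Sm So' Sm' N N' Lo Lm \<longleftrightarrow>
     additive_functor C D Lo Lm \<and>
     (\<exists>\<eta>. (\<forall>a\<in>Ob C. \<eta> a \<in> hom D (Lo (So a)) (So' (Lo a)) \<and> iso D (\<eta> a)) \<and>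
          (\<forall>f\<in>Ar C. cmp D (\<eta> (cod C f)) (Lm (Sm f)) = cmp D (Sm' (Lm f)) (\<eta> (dom C f))) \<and>
          (\<forall>x\<in>N. (Lo \<circ> fst x,
                   (\<lambda>i. if i = n then cmp D (\<eta> (fst x 1)) (Lm (snd x n)) else Lm (snd x i))) \<in> N'))"

definition full_sub :: "('o,'m,'x) addcat_scheme \<Rightarrow> 'o set \<Rightarrow> ('o,'m,'x) addcat_scheme" where
  "full_sub C A = C\<lparr>Ob := A, Ar := {f \<in> Ar C. dom C f \<in> A \<and> cod C f \<in> A}\<rparr>"

definition nang_subcat :: "('o,'m,'x) addcat_scheme \<Rightarrow> nat \<Rightarrow> ('o \<Rightarrow> 'o) \<Rightarrow> ('m \<Rightarrow> 'm) \<Rightarrow>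
     ('o,'m) nseq set \<Rightarrow> 'o set \<Rightarrow> ('o,'m) nseq set \<Rightarrow> bool" where
  "nang_subcat C n So Sm N A NA \<longleftrightarrow>
     A \<subseteq> Ob C \<and>
     (\<forall>a\<in>A. \<forall>b\<in>Ob C. (\<exists>f\<in>hom C a b. iso C f) \<longrightarrow> b \<in> A) \<and>
     So ` A = A \<and>
     n_angulated (full_sub C A) n So Sm NA \<and>
     nang_functor (full_sub C A) C n So Sm So Sm NA N id id"

definition complete_subcat :: "('o,'m,'x) addcat_scheme \<Rightarrow> nat \<Rightarrow> ('o,'m) nseq set \<Rightarrow> 'o set \<Rightarrow> bool" where
  "complete_subcat C n N A \<longleftrightarrow>
     (\<forall>x\<in>N. \<forall>j\<in>{1..n}. (\<forall>i\<in>{1..n} - {j}. fst x i \<in> A) \<longrightarrow> fst x j \<in> A)"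

end

theory Submission
  imports Defs
begin

lemma homD: "f \<in> hom C a b \<Longrightarrow> f \<in> Ar C \<and> dom C f = a \<and> cod C f = b"
  by (simp add: hom_def)

lemma hom_obs: "category C \<Longrightarrow> f \<in> hom C a b \<Longrightarrow> a \<in> Ob C \<and> b \<in> Ob C"
  unfolding category_def hom_def by auto

lemma cmp_hom: "category C \<Longrightarrow> f \<in> hom C a b \<Longrightarrow> g \<in> hom C b c \<Longrightarrow> cmp C g f \<in> hom C a c"
  unfolding category_def hom_def by auto

lemma idt_hom: "category C \<Longrightarrow> a \<in> Ob C \<Longrightarrow> idt C a \<in> hom C a a"
  unfolding category_def by auto

lemma idl: "category C \<Longrightarrow> f \<in> hom C a b \<Longrightarrow> cmp C (idt C b) f = f"
  unfolding category_def hom_def by auto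

lemma idr: "category C \<Longrightarrow> f \<in> hom C a b \<Longrightarrow> cmp C f (idt C a) = f"
  unfolding category_def hom_def by auto

lemma pre_cat: "preadditive C \<Longrightarrow> category C"
  unfolding preadditive_def by auto

lemma pre_G: "preadditive C \<Longrightarrow> a \<in> Ob C \<Longrightarrow> b \<in> Ob C \<Longrightarrow>
        zro C a b \<in> hom C a b \<and>
        (\<forall>f\<in>hom C a b. \<forall>g\<in>hom C a b. pls C f g \<in> hom C a b \<and> pls C f g = pls C g f) \<and>
        (\<forall>f\<in>hom C a b. \<forall>g\<in>hom C a b. \<forall>h\<in>hom C a b. pls C (pls C f g) h = pls C f (pls C g h)) \<and>
        (\<forall>f\<in>hom C a b. pls C f (zro C a b) = f \<and> ngt C f \<in> hom C a b \<and> pls C f (ngt C f) = zro C a b)"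
proof -
  assume P: "preadditive C" and a: "a \<in> Ob C" and b: "b \<in> Ob C"
  from P have "\<forall>a\<in>Ob C. \<forall>b\<in>Ob C.
        zro C a b \<in> hom C a b \<and>
        (\<forall>f\<in>hom C a b. \<forall>g\<in>hom C a b. pls C f g \<in> hom C a b \<and> pls C f g = pls C g f) \<and>
        (\<forall>f\<in>hom C a b. \<forall>g\<in>hom C a b. \<forall>h\<in>hom C a b. pls C (pls C f g) h = pls C f (pls C g h)) \<and>
        (\<forall>f\<in>hom C a b. pls C f (zro C a b) = f \<and> ngt C f \<in> hom C a b \<and> pls C f (ngt C f) = zro C a b)"
    unfolding preadditive_def by (rule conjunct1[OF conjunct2])
  from bspec[OF bspec[OF this a] b] show ?thesis .
qed

lemma pre_B: "preadditive C \<Longrightarrow> a \<in> Ob C \<Longrightarrow> b \<in> Ob C \<Longrightarrow> c \<in> Ob C \<Longrightarrow>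
        (\<forall>f\<in>hom C a b. \<forall>g\<in>hom C b c. \<forall>g'\<in>hom C b c.
            cmp C (pls C g g') f = pls C (cmp C g f) (cmp C g' f)) \<and>
        (\<forall>f\<in>hom C a b. \<forall>f'\<in>hom C a b. \<forall>g\<in>hom C b c.
            cmp C g (pls C f f') = pls C (cmp C g f) (cmp C g f'))"
proof -
  assume P: "preadditive C" and a: "a \<in> Ob C" and b: "b \<in> Ob C" and c: "c \<in> Ob C"
  from P have "\<forall>a\<in>Ob C. \<forall>b\<in>Ob C. \<forall>c\<in>Ob C.
        (\<forall>f\<in>hom C a b. \<forall>g\<in>hom C b c. \<forall>g'\<in>hom C b c.
            cmp C (pls C g g') f = pls C (cmp C g f) (cmp C g' f)) \<and>
        (\<forall>f\<in>hom C a b. \<forall>f'\<in>hom C a b. \<forall>g\<in>hom C b c.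
            cmp C g (pls C f f') = pls C (cmp C g f) (cmp C g f'))"
    unfolding preadditive_def by (rule conjunct2[OF conjunct2])
  hence "\<forall>b\<in>Ob C. \<forall>c\<in>Ob C.
        (\<forall>f\<in>hom C a b. \<forall>g\<in>hom C b c. \<forall>g'\<in>hom C b c.
            cmp C (pls C g g') f = pls C (cmp C g f) (cmp C g' f)) \<and>
        (\<forall>f\<in>hom C a b. \<forall>f'\<in>hom C a b. \<forall>g\<in>hom C b c.
            cmp C g (pls C f f') = pls C (cmp C g f) (cmp C g f'))" using a by (rule bspec)
  from bspec[OF bspec[OF this b] c] show ?thesis .
qed

lemma hom_obsP: "preadditive C \<Longrightarrow> f \<in> hom C a b \<Longrightarrow> a \<in> Ob C \<and> b \<in> Ob C"
  by (rule hom_obs[OF pre_cat])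

lemma zro_hom: "preadditive C \<Longrightarrow> a \<in> Ob C \<Longrightarrow> b \<in> Ob C \<Longrightarrow> zro C a b \<in> hom C a b"
  by (rule conjunct1[OF pre_G])

lemma pls_hom: "preadditive C \<Longrightarrow> f \<in> hom C a b \<Longrightarrow> g \<in> hom C a b \<Longrightarrow> pls C f g \<in> hom C a b"
proof -
  assume P: "preadditive C" and f: "f \<in> hom C a b" and g: "g \<in> hom C a b"
  note ab = conjunct1[OF hom_obsP[OF P f]] conjunct2[OF hom_obsP[OF P f]]
  note G = pre_G[OF P ab]
  from bspec[OF bspec[OF conjunct1[OF conjunct2[OF G]] f] g] show ?thesis by (rule conjunct1)
qed

lemma pls_comm: "preadditive C \<Longrightarrow> f \<in> hom C a b \<Longrightarrow> g \<in> hom C a b \<Longrightarrow> pls C f g = pls C g f"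
proof -
  assume P: "preadditive C" and f: "f \<in> hom C a b" and g: "g \<in> hom C a b"
  note ab = conjunct1[OF hom_obsP[OF P f]] conjunct2[OF hom_obsP[OF P f]]
  note G = pre_G[OF P ab]
  from bspec[OF bspec[OF conjunct1[OF conjunct2[OF G]] f] g] show ?thesis by (rule conjunct2)
qed

lemma pls_assoc: "preadditive C \<Longrightarrow> f \<in> hom C a b \<Longrightarrow> g \<in> hom C a b \<Longrightarrow> h \<in> hom C a b \<Longrightarrow>
   pls C (pls C f g) h = pls C f (pls C g h)"
proof -
  assume P: "preadditive C" and f: "f \<in> hom C a b" and g: "g \<in> hom C a b" and h: "h \<in> hom C a b"
  note ab = conjunct1[OF hom_obsP[OF P f]] conjunct2[OF hom_obsP[OF P f]]
  note G = pre_G[OF P ab]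
  from bspec[OF bspec[OF bspec[OF conjunct1[OF conjunct2[OF conjunct2[OF G]]] f] g] h] show ?thesis .
qed

lemma pre_G4: "preadditive C \<Longrightarrow> f \<in> hom C a b \<Longrightarrow>
   pls C f (zro C a b) = f \<and> ngt C f \<in> hom C a b \<and> pls C f (ngt C f) = zro C a b"
proof -
  assume P: "preadditive C" and f: "f \<in> hom C a b"
  note ab = conjunct1[OF hom_obsP[OF P f]] conjunct2[OF hom_obsP[OF P f]]
  note G = pre_G[OF P ab]
  from bspec[OF conjunct2[OF conjunct2[OF conjunct2[OF G]]] f] show ?thesis .
qed

lemma pls_zro: "preadditive C \<Longrightarrow> f \<in> hom C a b \<Longrightarrow> pls C f (zro C a b) = f"
  by (rule conjunct1[OF pre_G4])

lemma ngt_hom: "preadditive C \<Longrightarrow> f \<in> hom C a b \<Longrightarrow> ngt C f \<in> hom C a b"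
  by (rule conjunct1[OF conjunct2[OF pre_G4]])

lemma pls_ngt: "preadditive C \<Longrightarrow> f \<in> hom C a b \<Longrightarrow> pls C f (ngt C f) = zro C a b"
  by (rule conjunct2[OF conjunct2[OF pre_G4]])

lemma cmp_pls_r: "preadditive C \<Longrightarrow> f \<in> hom C a b \<Longrightarrow> f' \<in> hom C a b \<Longrightarrow> g \<in> hom C b c \<Longrightarrow>
   cmp C g (pls C f f') = pls C (cmp C g f) (cmp C g f')"
proof -
  assume P: "preadditive C" and h: "f \<in> hom C a b" "f' \<in> hom C a b" "g \<in> hom C b c"
  note G = pre_B[OF P conjunct1[OF hom_obsP[OF P h(1)]] conjunct2[OF hom_obsP[OF P h(1)]] conjunct2[OF hom_obsP[OF P h(3)]]]
  from bspec[OF bspec[OF bspec[OF conjunct2[OF G] h(1)] h(2)] h(3)] show ?thesis .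
qed

lemma ex1_eq: "\<exists>!x. P x \<Longrightarrow> P a \<Longrightarrow> P b \<Longrightarrow> a = b"
  by auto

lemma zero_src_uniq: "category C \<Longrightarrow> is_zero_obj C z \<Longrightarrow> f \<in> hom C z b \<Longrightarrow> g \<in> hom C z b \<Longrightarrow> f = g"
proof -
  assume K: "category C" and Z: "is_zero_obj C z" and f: "f \<in> hom C z b" and g: "g \<in> hom C z b"
  have b: "b \<in> Ob C" using conjunct2[OF hom_obs[OF K f]] .
  have "\<forall>b\<in>Ob C. (\<exists>!f. f \<in> hom C z b) \<and> (\<exists>!f. f \<in> hom C b z)"
    using Z unfolding is_zero_obj_def by (rule conjunct2)
  from conjunct1[OF bspec[OF this b]] show ?thesis using f g by (rule ex1_eq)
qed

lemma zero_tgt_uniq: "category C \<Longrightarrow> is_zero_obj C z \<Longrightarrow> f \<in> hom C b z \<Longrightarrow> g \<in> hom C b z \<Longrightarrow> f = g"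
proof -
  assume K: "category C" and Z: "is_zero_obj C z" and f: "f \<in> hom C b z" and g: "g \<in> hom C b z"
  have b: "b \<in> Ob C" using conjunct1[OF hom_obs[OF K f]] .
  have "\<forall>b\<in>Ob C. (\<exists>!f. f \<in> hom C z b) \<and> (\<exists>!f. f \<in> hom C b z)"
    using Z unfolding is_zero_obj_def by (rule conjunct2)
  from conjunct2[OF bspec[OF this b]] show ?thesis using f g by (rule ex1_eq)
qed



lemma idem_zero: "preadditive C \<Longrightarrow> g \<in> hom C a b \<Longrightarrow> pls C g g = g \<Longrightarrow> g = zro C a b"
proof -
  assume P: "preadditive C" and g: "g \<in> hom C a b" and e: "pls C g g = g"
  have "g = pls C g (zro C a b)" using pls_zro[OF P g] by simp
  also have "\<dots> = pls C g (pls C g (ngt C g))" using pls_ngt[OF P g] by simp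
  also have "\<dots> = pls C (pls C g g) (ngt C g)" using pls_assoc[OF P g g ngt_hom[OF P g]] by simp
  also have "\<dots> = zro C a b" using e pls_ngt[OF P g] by simp
  finally show ?thesis .
qed

lemma thru_zero: "preadditive C \<Longrightarrow> is_zero_obj C z \<Longrightarrow> f \<in> hom C a z \<Longrightarrow> g \<in> hom C z b \<Longrightarrow>
   cmp C g f = zro C a b"
proof -
  assume P: "preadditive C" and Z: "is_zero_obj C z" and f: "f \<in> hom C a z" and g: "g \<in> hom C z b"
  have ff: "pls C f f = f" using zero_tgt_uniq[OF pre_cat[OF P] Z pls_hom[OF P f f] f] .
  have "pls C (cmp C g f) (cmp C g f) = cmp C g f"
    using cmp_pls_r[OF P f f g] ff by simp
  thus ?thesis using idem_zero[OF P cmp_hom[OF pre_cat[OF P] f g]] by simp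
qed

lemma biprod_zero_right: "preadditive C \<Longrightarrow> is_zero_obj C z \<Longrightarrow> b \<in> Ob C \<Longrightarrow>
   biprod C b z b (idt C b) (zro C z b) (idt C b) (zro C b z)"
proof -
  assume P: "preadditive C" and Z: "is_zero_obj C z" and b: "b \<in> Ob C"
  have K: "category C" using pre_cat[OF P] .
  have z: "z \<in> Ob C" using Z unfolding is_zero_obj_def by blast
  have h1: "idt C b \<in> hom C b b" using idt_hom[OF K b] .
  have h2: "zro C z b \<in> hom C z b" using zro_hom[OF P z b] .
  have h3: "zro C b z \<in> hom C b z" using zro_hom[OF P b z] .
  have e1: "cmp C (zro C b z) (zro C z b) = idt C z"
    using zero_src_uniq[OF K Z cmp_hom[OF K h2 h3] idt_hom[OF K z]] .
  have e2: "cmp C (zro C z b) (zro C b z) = zro C b b" using thru_zero[OF P Z h3 h2] .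
  show ?thesis unfolding biprod_def
    using b z h1 h2 h3 e1 e2 idl[OF K h1] idl[OF K h2] idr[OF K h3] pls_zro[OF P h1] by simp
qed

lemma biprod_zero_left: "preadditive C \<Longrightarrow> is_zero_obj C z \<Longrightarrow> b \<in> Ob C \<Longrightarrow>
   biprod C z b b (zro C z b) (idt C b) (zro C b z) (idt C b)"
proof -
  assume P: "preadditive C" and Z: "is_zero_obj C z" and b: "b \<in> Ob C"
  have K: "category C" using pre_cat[OF P] .
  have z: "z \<in> Ob C" using Z unfolding is_zero_obj_def by blast
  have h1: "idt C b \<in> hom C b b" using idt_hom[OF K b] .
  have h2: "zro C z b \<in> hom C z b" using zro_hom[OF P z b] .
  have h3: "zro C b z \<in> hom C b z" using zro_hom[OF P b z] .
  have e1: "cmp C (zro C b z) (zro C z b) = idt C z"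
    using zero_src_uniq[OF K Z cmp_hom[OF K h2 h3] idt_hom[OF K z]] .
  have e2: "cmp C (zro C z b) (zro C b z) = zro C b b" using thru_zero[OF P Z h3 h2] .
  have e3: "pls C (zro C b b) (idt C b) = idt C b"
    using pls_comm[OF P zro_hom[OF P b b] h1] pls_zro[OF P h1] by simp
  show ?thesis unfolding biprod_def
    using b z h1 h2 h3 e1 e2 e3 idl[OF K h1] idl[OF K h2] idr[OF K h3] by simp
qed

lemma biprod_swap: "preadditive C \<Longrightarrow> biprod C a b s i1 i2 p1 p2 \<Longrightarrow> biprod C b a s i2 i1 p2 p1"
proof -
  assume P: "preadditive C" and B: "biprod C a b s i1 i2 p1 p2"
  have K: "category C" using pre_cat[OF P] .
  have h: "i1 \<in> hom C a s" "i2 \<in> hom C b s" "p1 \<in> hom C s a" "p2 \<in> hom C s b"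
    using B unfolding biprod_def by blast+
  have "pls C (cmp C i1 p1) (cmp C i2 p2) = pls C (cmp C i2 p2) (cmp C i1 p1)"
    using pls_comm[OF P cmp_hom[OF K h(3) h(1)] cmp_hom[OF K h(4) h(2)]] .
  thus ?thesis using B unfolding biprod_def by simp
qed


lemma agree_nseq:
  assumes "is_nseq C n So x" "\<forall>i\<in>{1..n}. fst y i = fst x i \<and> snd y i = snd x i" "n \<ge> 1"
  shows "is_nseq C n So y"
proof -
  have n1: "1 \<in> {1..n}" "n \<in> {1..n}" using assms(3) by auto
  have a: "\<forall>i\<in>{1..n}. fst y i \<in> Ob C" using assms(1,2) unfolding is_nseq_def by simp
  have b: "\<forall>i\<in>{1..<n}. snd y i \<in> hom C (fst y i) (fst y (Suc i))"
  proof
    fix i assume i: "i \<in> {1..<n}"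
    hence "i \<in> {1..n}" "Suc i \<in> {1..n}" by auto
    thus "snd y i \<in> hom C (fst y i) (fst y (Suc i))" using assms(1,2) i unfolding is_nseq_def by simp
  qed
  have c: "snd y n \<in> hom C (fst y n) (So (fst y 1))" using assms(1,2) n1 unfolding is_nseq_def by simp
  show ?thesis unfolding is_nseq_def using a b c by blast
qed

lemma agree_seqiso:
  assumes K: "category C" and F: "functor C C So Sm" and x: "is_nseq C n So x"
    and ag: "\<forall>i\<in>{1..n}. fst y i = fst x i \<and> snd y i = snd x i" and n: "n \<ge> 1"
  shows "seqiso C n Sm x y (\<lambda>i. idt C (fst x i))"
proof -
  have ob: "\<forall>i\<in>{1..n}. fst x i \<in> Ob C" using x unfolding is_nseq_def by blast
  have 1: "\<forall>i\<in>{1..n}. idt C (fst x i) \<in> hom C (fst x i) (fst y i)"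
  proof
    fix i assume i: "i \<in> {1..n}"
    have "fst y i = fst x i" using ag i by blast
    moreover have "fst x i \<in> Ob C" using ob i by blast
    ultimately show "idt C (fst x i) \<in> hom C (fst x i) (fst y i)" using idt_hom[OF K] by metis
  qed
  have 2: "\<forall>i\<in>{1..<n}. cmp C (snd y i) (idt C (fst x i)) = cmp C (idt C (fst x (Suc i))) (snd x i)"
  proof
    fix i assume i: "i \<in> {1..<n}"
    hence h: "snd x i \<in> hom C (fst x i) (fst x (Suc i))" using x unfolding is_nseq_def by blast
    have "i \<in> {1..n}" using i by simp
    hence "snd y i = snd x i" using ag by blast
    thus "cmp C (snd y i) (idt C (fst x i)) = cmp C (idt C (fst x (Suc i))) (snd x i)"
      using idl[OF K h] idr[OF K h] by simp
  qed
  have h: "snd x n \<in> hom C (fst x n) (So (fst x 1))" using x unfolding is_nseq_def by blast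
  have o1: "fst x 1 \<in> Ob C" using ob n by auto
  have "Sm (idt C (fst x 1)) = idt C (So (fst x 1))" using F o1 unfolding functor_def by blast
  moreover have "n \<in> {1..n}" using n by simp
  hence "snd y n = snd x n" using ag by blast
  ultimately have 3: "cmp C (snd y n) (idt C (fst x n)) = cmp C (Sm (idt C (fst x 1))) (snd x n)"
    using idl[OF K h] idr[OF K h] by simp
  have 4: "\<forall>i\<in>{1..n}. iso C (idt C (fst x i))"
  proof
    fix i assume i: "i \<in> {1..n}"
    have h: "idt C (fst x i) \<in> hom C (fst x i) (fst x i)" using ob i idt_hom[OF K] by blast
    have e: "cmp C (idt C (fst x i)) (idt C (fst x i)) = idt C (fst x i)" using idl[OF K h] .
    have d: "dom C (idt C (fst x i)) = fst x i" "cod C (idt C (fst x i)) = fst x i" "idt C (fst x i) \<in> Ar C"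
      using homD[OF h] by auto
    show "iso C (idt C (fst x i))" unfolding iso_def d using h e d(3) by blast
  qed
  have "seqmor C n Sm x y (\<lambda>i. idt C (fst x i))"
    unfolding seqmor_def using 1 2 3 by (intro conjI)
  thus ?thesis unfolding seqiso_def using 4 by (intro conjI)
qed

lemma dsum_construct:
  assumes P: "preadditive C" and F: "functor C C So Sm"
    and y: "is_nseq C n So y" and w: "is_nseq C n So w" and n: "n \<ge> 1"
    and B: "\<forall>k\<in>{1..n}. biprod C (fst y k) (fst w k) (X k) (I1 k) (I2 k) (P1 k) (P2 k)"
    and s: "s = (X, \<lambda>k. if k < n then
            pls C (cmp C (I1 (Suc k)) (cmp C (snd y k) (P1 k)))
                  (cmp C (I2 (Suc k)) (cmp C (snd w k) (P2 k)))
          else pls C (cmp C (Sm (I1 1)) (cmp C (snd y n) (P1 n)))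
                  (cmp C (Sm (I2 1)) (cmp C (snd w n) (P2 n))))"
  shows "is_nseq C n So s \<and> is_dsum C n Sm y w s"
proof -
  have K: "category C" using pre_cat[OF P] .
  have ob: "\<forall>k\<in>{1..n}. X k \<in> Ob C" using B unfolding biprod_def by blast
  have m: "\<forall>k\<in>{1..<n}. snd s k \<in> hom C (fst s k) (fst s (Suc k))"
  proof
    fix k assume k: "k \<in> {1..<n}"
    have k1: "k \<in> {1..n}" "Suc k \<in> {1..n}" using k by auto
    have b1: "biprod C (fst y k) (fst w k) (X k) (I1 k) (I2 k) (P1 k) (P2 k)" using B k1 by blast
    have b2: "biprod C (fst y (Suc k)) (fst w (Suc k)) (X (Suc k)) (I1 (Suc k)) (I2 (Suc k)) (P1 (Suc k)) (P2 (Suc k))" using B k1 by blast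
    have hy: "snd y k \<in> hom C (fst y k) (fst y (Suc k))" using y k unfolding is_nseq_def by blast
    have hw: "snd w k \<in> hom C (fst w k) (fst w (Suc k))" using w k unfolding is_nseq_def by blast
    have a1: "cmp C (I1 (Suc k)) (cmp C (snd y k) (P1 k)) \<in> hom C (X k) (X (Suc k))"
      using b1 b2 hy unfolding biprod_def by (meson K cmp_hom)
    have a2: "cmp C (I2 (Suc k)) (cmp C (snd w k) (P2 k)) \<in> hom C (X k) (X (Suc k))"
      using b1 b2 hw unfolding biprod_def by (meson K cmp_hom)
    show "snd s k \<in> hom C (fst s k) (fst s (Suc k))" using pls_hom[OF P a1 a2] k s by simp
  qed
  have n1: "1 \<in> {1..n}" "n \<in> {1..n}" using n by auto
  have b1: "biprod C (fst y 1) (fst w 1) (X 1) (I1 1) (I2 1) (P1 1) (P2 1)" using B n1 by blast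
  have bn: "biprod C (fst y n) (fst w n) (X n) (I1 n) (I2 n) (P1 n) (P2 n)" using B n1 by blast
  have hy: "snd y n \<in> hom C (fst y n) (So (fst y 1))" using y unfolding is_nseq_def by blast
  have hw: "snd w n \<in> hom C (fst w n) (So (fst w 1))" using w unfolding is_nseq_def by blast
  have fi1: "Sm (I1 1) \<in> hom C (So (fst y 1)) (So (X 1))"
    using F b1 unfolding functor_def biprod_def hom_def by auto
  have fi2: "Sm (I2 1) \<in> hom C (So (fst w 1)) (So (X 1))"
    using F b1 unfolding functor_def biprod_def hom_def by auto
  have a1: "cmp C (Sm (I1 1)) (cmp C (snd y n) (P1 n)) \<in> hom C (X n) (So (X 1))"
    using bn hy fi1 unfolding biprod_def by (meson K cmp_hom)
  have a2: "cmp C (Sm (I2 1)) (cmp C (snd w n) (P2 n)) \<in> hom C (X n) (So (X 1))"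
    using bn hw fi2 unfolding biprod_def by (meson K cmp_hom)
  have l: "snd s n \<in> hom C (fst s n) (So (fst s 1))" using pls_hom[OF P a1 a2] s by simp
  have "is_nseq C n So s" unfolding is_nseq_def using ob m l s by simp
  moreover have "is_dsum C n Sm y w s" unfolding is_dsum_def
    apply (rule exI[of _ I1], rule exI[of _ I2], rule exI[of _ P1], rule exI[of _ P2])
    using B s by simp
  ultimately show ?thesis by blast
qed


lemma hom_full_sub: "a \<in> A \<Longrightarrow> b \<in> A \<Longrightarrow> hom (full_sub C A) a b = hom C a b"
  unfolding hom_def full_sub_def by auto

lemma na_add: "n_angulated C n So Sm N \<Longrightarrow> additive C" by (simp add: n_angulated_def)
lemma na_aut: "n_angulated C n So Sm N \<Longrightarrow> automorphism C So Sm" by (simp add: n_angulated_def)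
lemma na_seq: "n_angulated C n So Sm N \<Longrightarrow> x \<in> N \<Longrightarrow> is_nseq C n So x" by (simp add: n_angulated_def)
lemma na_sum: "n_angulated C n So Sm N \<Longrightarrow> is_nseq C n So x \<Longrightarrow> is_nseq C n So y \<Longrightarrow> is_nseq C n So s
  \<Longrightarrow> is_dsum C n Sm x y s \<Longrightarrow> x \<in> N \<Longrightarrow> y \<in> N \<Longrightarrow> s \<in> N"
  unfolding n_angulated_def by blast
lemma na_iso: "n_angulated C n So Sm N \<Longrightarrow> x \<in> N \<Longrightarrow> is_nseq C n So y \<Longrightarrow> seqiso C n Sm x y \<phi> \<Longrightarrow> y \<in> N"
  unfolding n_angulated_def by blast
lemma na_triv: "n_angulated C n So Sm N \<Longrightarrow> a \<in> Ob C \<Longrightarrow> is_zero_obj C z \<Longrightarrow> trivseq C n So z a \<in> N"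
  unfolding n_angulated_def by blast
lemma na_rot: "n_angulated C n So Sm N \<Longrightarrow> is_nseq C n So x \<Longrightarrow> rotL C n So Sm x \<in> N \<Longrightarrow> x \<in> N"
  unfolding n_angulated_def by blast

theorem lemma4p3:
  fixes C :: "('o,'m) addcat" and n :: nat
    and So :: "'o \<Rightarrow> 'o" and Sm :: "'m \<Rightarrow> 'm"
    and N :: "('o,'m) nseq set" and A :: "'o set" and NA :: "('o,'m) nseq set"
  assumes "n \<ge> 3"
    and "n_angulated C n So Sm N"
    and "nang_subcat C n So Sm N A NA"
    and "complete_subcat C n N A"
    and "c \<in> Ob C"
    and "a \<in> A"
    and "biprod C c a s i1 i2 p1 p2"
    and "s \<in> A"
  shows "c \<in> A"
proof -
  note n3 = assms(1) and NAng = assms(2) and Sub = assms(3) and Cpl = assms(4)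
  note cO = assms(5) and aA = assms(6) and bp = assms(7) and sA = assms(8)
  have Add: "additive C" using na_add[OF NAng] .
  have P: "preadditive C" using Add unfolding additive_def by blast
  have K: "category C" using pre_cat[OF P] .
  have Aut: "automorphism C So Sm" using na_aut[OF NAng] .
  have F: "functor C C So Sm" using Aut unfolding automorphism_def by blast
  have bijO: "bij_betw So (Ob C) (Ob C)" and bijA: "bij_betw Sm (Ar C) (Ar C)"
    using Aut unfolding automorphism_def by blast+
  have AO: "A \<subseteq> Ob C" using Sub unfolding nang_subcat_def by blast
  have isoA: "\<forall>a\<in>A. \<forall>b\<in>Ob C. (\<exists>f\<in>hom C a b. iso C f) \<longrightarrow> b \<in> A"
    using Sub unfolding nang_subcat_def by blast
  have SA: "So ` A = A" using Sub unfolding nang_subcat_def by blast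
  have "n_angulated (full_sub C A) n So Sm NA" using Sub unfolding nang_subcat_def by blast
  hence AddA: "additive (full_sub C A)" by (rule na_add)
  obtain zA where zA: "is_zero_obj (full_sub C A) zA" using AddA unfolding additive_def by blast
  have zAA: "zA \<in> A" using zA unfolding is_zero_obj_def full_sub_def by simp
  have zAO: "zA \<in> Ob C" using zAA AO by blast
  have ObA: "Ob (full_sub C A) = A" unfolding full_sub_def by simp
  have "\<forall>b\<in>Ob (full_sub C A). (\<exists>!f. f \<in> hom (full_sub C A) zA b) \<and> (\<exists>!f. f \<in> hom (full_sub C A) b zA)"
    using zA unfolding is_zero_obj_def by (rule conjunct2)
  hence "\<exists>!f. f \<in> hom (full_sub C A) zA zA" using zAA ObA by blast
  hence zAu: "\<exists>!f. f \<in> hom C zA zA" using hom_full_sub[OF zAA zAA, of C] by simp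
  obtain z0 where Z: "is_zero_obj C z0" using Add unfolding additive_def by blast
  have z0O: "z0 \<in> Ob C" using Z unfolding is_zero_obj_def by blast
  have z0A: "z0 \<in> A"
  proof -
    have f: "zro C zA z0 \<in> hom C zA z0" using zro_hom[OF P zAO z0O] .
    have g: "zro C z0 zA \<in> hom C z0 zA" using zro_hom[OF P z0O zAO] .
    have e1: "cmp C (zro C z0 zA) (zro C zA z0) = idt C zA"
      using zAu cmp_hom[OF K f g] idt_hom[OF K zAO] by blast
    have e2: "cmp C (zro C zA z0) (zro C z0 zA) = idt C z0"
      using zero_src_uniq[OF K Z cmp_hom[OF K g f] idt_hom[OF K z0O]] .
    have "iso C (zro C zA z0)" unfolding iso_def using homD[OF f] g e1 e2 by auto
    thus ?thesis using isoA zAA z0O f by blast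
  qed
  obtain w1 where w1O: "w1 \<in> Ob C" and Sw1: "So w1 = z0"
    using bijO z0O unfolding bij_betw_def by (metis imageE)
  have W: "is_zero_obj C w1"
  proof -
    have "\<forall>b\<in>Ob C. (\<exists>!f. f \<in> hom C w1 b)"
    proof
      fix b assume b: "b \<in> Ob C"
      have "\<And>f g. f \<in> hom C w1 b \<Longrightarrow> g \<in> hom C w1 b \<Longrightarrow> f = g"
      proof -
        fix f g assume f: "f \<in> hom C w1 b" and g: "g \<in> hom C w1 b"
        have "Sm f \<in> hom C z0 (So b)" "Sm g \<in> hom C z0 (So b)"
          using F f g Sw1 homD[OF f] homD[OF g] unfolding functor_def by auto
        hence "Sm f = Sm g" using zero_src_uniq[OF K Z] by blast
        thus "f = g" using bijA homD[OF f] homD[OF g] unfolding bij_betw_def inj_on_def by blast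
      qed
      thus "\<exists>!f. f \<in> hom C w1 b" using zro_hom[OF P w1O b] by blast
    qed
    moreover have "\<forall>b\<in>Ob C. (\<exists>!f. f \<in> hom C b w1)"
    proof
      fix b assume b: "b \<in> Ob C"
      have "\<And>f g. f \<in> hom C b w1 \<Longrightarrow> g \<in> hom C b w1 \<Longrightarrow> f = g"
      proof -
        fix f g assume f: "f \<in> hom C b w1" and g: "g \<in> hom C b w1"
        have "Sm f \<in> hom C (So b) z0" "Sm g \<in> hom C (So b) z0"
          using F f g Sw1 homD[OF f] homD[OF g] unfolding functor_def by auto
        hence "Sm f = Sm g" using zero_tgt_uniq[OF K Z] by blast
        thus "f = g" using bijA homD[OF f] homD[OF g] unfolding bij_betw_def inj_on_def by blast
      qed
      thus "\<exists>!f. f \<in> hom C b w1" using zro_hom[OF P b w1O] by blast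
    qed
    ultimately show ?thesis unfolding is_zero_obj_def using w1O by blast
  qed
  define fw where "fw = (\<lambda>i::nat. if i = 1 then w1 else if i \<le> 3 then c else z0)"
  define w where "w = (fw, \<lambda>i::nat. if i = 1 then zro C w1 c else if i = 2 then idt C c
            else zro C (fw i) (if i < n then fw (Suc i) else So w1))"
  have fwO: "\<And>i. fw i \<in> Ob C" unfolding fw_def using w1O cO z0O by simp
  have wseq: "is_nseq C n So w"
  proof -
    have "\<forall>i\<in>{1..<n}. snd w i \<in> hom C (fst w i) (fst w (Suc i))"
    proof
      fix i assume i: "i \<in> {1..<n}"
      show "snd w i \<in> hom C (fst w i) (fst w (Suc i))"
      proof (cases "i = 1")
        case True thus ?thesis unfolding w_def fw_def using zro_hom[OF P w1O cO] by simp
      next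
        case F1: False
        show ?thesis
        proof (cases "i = 2")
          case True thus ?thesis unfolding w_def fw_def using idt_hom[OF K cO] by simp
        next
          case False thus ?thesis using F1 i zro_hom[OF P fwO fwO] unfolding w_def by simp
        qed
      qed
    qed
    moreover have "snd w n \<in> hom C (fst w n) (So (fst w 1))"
      using n3 zro_hom[OF P fwO, of "So w1" n] Sw1 z0O unfolding w_def fw_def by simp
    ultimately show ?thesis unfolding is_nseq_def w_def using fwO by simp
  qed
  define T where "T = trivseq C n So z0 c"
  have TN: "T \<in> N" unfolding T_def using na_triv[OF NAng cO Z] .
  have Tseq: "is_nseq C n So T" using na_seq[OF NAng TN] .
  have SoC: "So c \<in> Ob C" using F cO unfolding functor_def by blast
  have ag: "\<forall>i\<in>{1..n}. fst (rotL C n So Sm w) i = fst T i \<and> snd (rotL C n So Sm w) i = snd T i"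
  proof
    fix i assume i: "i \<in> {1..n}"
    show "fst (rotL C n So Sm w) i = fst T i \<and> snd (rotL C n So Sm w) i = snd T i"
    proof (cases "i < n")
      case True
      thus ?thesis using i n3 Sw1 unfolding rotL_def w_def fw_def T_def trivseq_def by auto
    next
      case False
      hence inn: "i = n" using i by simp
      have h: "Sm (zro C w1 c) \<in> hom C z0 (So c)"
        using F zro_hom[OF P w1O cO] Sw1 homD[OF zro_hom[OF P w1O cO]] unfolding functor_def by auto
      have "sgnpow C n (Sm (zro C w1 c)) = zro C z0 (So c)"
      proof -
        have u1: "Sm (zro C w1 c) = zro C z0 (So c)" using zero_src_uniq[OF K Z h zro_hom[OF P z0O SoC]] .
        have u2: "ngt C (Sm (zro C w1 c)) = zro C z0 (So c)"
          using zero_src_uniq[OF K Z ngt_hom[OF P h] zro_hom[OF P z0O SoC]] .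
        show ?thesis unfolding sgnpow_def using u1 u2 by simp
      qed
      thus ?thesis using inn n3 Sw1 unfolding rotL_def w_def fw_def T_def trivseq_def by auto
    qed
  qed
  have Rseq: "is_nseq C n So (rotL C n So Sm w)" using agree_nseq[OF Tseq ag] n3 by simp
  have "seqiso C n Sm T (rotL C n So Sm w) (\<lambda>i. idt C (fst T i))"
    using agree_seqiso[OF K F Tseq ag] n3 by simp
  hence "rotL C n So Sm w \<in> N" using na_iso[OF NAng TN Rseq] by blast
  hence wN: "w \<in> N" using na_rot[OF NAng wseq] by blast
  define y where "y = trivseq C n So z0 a"
  have aO: "a \<in> Ob C" using aA AO by blast
  have yN: "y \<in> N" unfolding y_def using na_triv[OF NAng aO Z] .
  have yseq: "is_nseq C n So y" using na_seq[OF NAng yN] .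
  define X where "X = (\<lambda>k::nat. if k = 1 then a else if k = 2 then s else if k = 3 then c else z0)"
  define I1 where "I1 = (\<lambda>k::nat. if k = 1 then idt C a else if k = 2 then i2 else if k = 3 then zro C z0 c else idt C z0)"
  define I2 where "I2 = (\<lambda>k::nat. if k = 1 then zro C w1 a else if k = 2 then i1 else if k = 3 then idt C c else zro C z0 z0)"
  define P1 where "P1 = (\<lambda>k::nat. if k = 1 then idt C a else if k = 2 then p2 else if k = 3 then zro C c z0 else idt C z0)"
  define P2 where "P2 = (\<lambda>k::nat. if k = 1 then zro C a w1 else if k = 2 then p1 else if k = 3 then idt C c else zro C z0 z0)"
  have B: "\<forall>k\<in>{1..n}. biprod C (fst y k) (fst w k) (X k) (I1 k) (I2 k) (P1 k) (P2 k)"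
  proof
    fix k assume k: "k \<in> {1..n}"
    consider "k = 1" | "k = 2" | "k = 3" | "k > 3" using k by fastforce
    thus "biprod C (fst y k) (fst w k) (X k) (I1 k) (I2 k) (P1 k) (P2 k)"
    proof cases
      case 1 thus ?thesis using biprod_zero_right[OF P W aO]
        unfolding y_def trivseq_def w_def fw_def X_def I1_def I2_def P1_def P2_def by simp
    next
      case 2 thus ?thesis using biprod_swap[OF P bp]
        unfolding y_def trivseq_def w_def fw_def X_def I1_def I2_def P1_def P2_def by simp
    next
      case 3 thus ?thesis using biprod_zero_left[OF P Z cO]
        unfolding y_def trivseq_def w_def fw_def X_def I1_def I2_def P1_def P2_def by simp
    next
      case 4 thus ?thesis using biprod_zero_right[OF P Z z0O]
        unfolding y_def trivseq_def w_def fw_def X_def I1_def I2_def P1_def P2_def by simp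
    qed
  qed
  define x where "x = (X, \<lambda>k. if k < n then
            pls C (cmp C (I1 (Suc k)) (cmp C (snd y k) (P1 k)))
                  (cmp C (I2 (Suc k)) (cmp C (snd w k) (P2 k)))
          else pls C (cmp C (Sm (I1 1)) (cmp C (snd y n) (P1 n)))
                  (cmp C (Sm (I2 1)) (cmp C (snd w n) (P2 n))))"
  have n1: "1 \<le> n" using n3 by simp
  have xd: "is_nseq C n So x \<and> is_dsum C n Sm y w x"
    by (rule dsum_construct[OF P F yseq wseq n1 B x_def])
  have xN: "x \<in> N" using na_sum[OF NAng yseq wseq conjunct1[OF xd] conjunct2[OF xd] yN wN] .
  have fx: "fst x = X" unfolding x_def by simp
  have oth: "\<forall>i\<in>{1..n} - {3}. fst x i \<in> A"
  proof
    fix i assume "i \<in> {1..n} - {3}"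
    hence "i = 1 \<or> i = 2 \<or> i > 3" by auto
    thus "fst x i \<in> A" unfolding fx X_def using aA sA z0A by auto
  qed
  have "\<forall>x\<in>N. \<forall>j\<in>{1..n}. (\<forall>i\<in>{1..n} - {j}. fst x i \<in> A) \<longrightarrow> fst x j \<in> A"
    using Cpl unfolding complete_subcat_def .
  moreover have "(3::nat) \<in> {1..n}" using n3 by simp
  ultimately have "fst x 3 \<in> A" using xN oth by blast
  thus ?thesis unfolding fx X_def by simp
qed

end
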